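(* Consider the following maps $\mathbf f_c:\mathbb{R}^2\to\mathbb{R}^2$ (with real parameter $c$ where present), together with the integer $n$: fold: $\mathbf f(x_1,x_2)=(x_1,\,x_2^2)$, $n=2$; cusp: $\mathbf f(x_1,x_2)=(x_1,\,x_1x_2+x_2^3)$, $n=3$; swallowtail: $\mathbf f_c(x_1,x_2)=(x_1x_2+cx_1^2+x_1^4,\,x_2)$, $n=4$; elliptic umbilic: $\mathbf f_c(x_1,x_2)=(3x_2^2-3x_1^2-2cx_1,\,6x_1x_2-2cx_2)$, $n=4$; hyperbolic umbilic: $\mathbf f_c(x_1,x_2)=(-3x_1^2-cx_2,\,-3x_2^2-cx_1)$, $n=4$. For each of these, if $\mathbf s\in\mathbb{R}^2$ has exactly $n$ preimages $\mathbf x_1,\dots,\mathbf x_n$ under $\mathbf f_c$ and $\det[\mathrm{Jac}\,\mathbf f_c](\mathbf x_i)\neq0$ for each $i$, then $\sum_{i=1}^n\mathfrak M_i=0$, where $\mathfrak M_i=1/\det[\mathrm{Jac}\,\mathbf f_c](\mathbf x_i)$.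
   Context: These maps are the universal local forms of generic maps between planes (induced by Lagrangian generating families) near caustics of codimension at most 3. $\mathfrak M_i$ is the signed magnification of the lensed image $\mathbf x_i$; equivalently, $\mathfrak M_i$ is the reciprocal of the Gaussian curvature of the graph of the generating function at the corresponding critical point. The set of $\mathbf s$ with exactly $n$ nondegenerate preimages is the $n$-image region. *)

theory Defs
  imports "HOL-Analysis.Analysis"
begin

definition jac_det :: "(real \<times> real \<Rightarrow> real \<times> real) \<Rightarrow> real \<times> real \<Rightarrow> real" where
  "jac_det f x = (let D = frechet_derivative f (at x) in
      fst (D (1,0)) * snd (D (0,1)) - fst (D (0,1)) * snd (D (1,0)))"

datatype caustic = Fold | Cusp | Swallowtail | EllipticUmbilic | HyperbolicUmbilic

fun lens_map :: "caustic \<Rightarrow> real \<Rightarrow> real \<times> real \<Rightarrow> real \<times> real" where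
  "lens_map Fold c (x1, x2) = (x1, x2^2)"
| "lens_map Cusp c (x1, x2) = (x1, x1*x2 + x2^3)"
| "lens_map Swallowtail c (x1, x2) = (x1*x2 + c*x1^2 + x1^4, x2)"
| "lens_map EllipticUmbilic c (x1, x2) = (3*x2^2 - 3*x1^2 - 2*c*x1, 6*x1*x2 - 2*c*x2)"
| "lens_map HyperbolicUmbilic c (x1, x2) = (-3*x1^2 - c*x2, -3*x2^2 - c*x1)"

fun image_count :: "caustic \<Rightarrow> nat" where
  "image_count Fold = 2"
| "image_count Cusp = 3"
| "image_count Swallowtail = 4"
| "image_count EllipticUmbilic = 4"
| "image_count HyperbolicUmbilic = 4"

end

theory Submission
  imports Defs
begin


lemma quartic_deriv:
  fixes a b c d e r1 r2 r3 r4 :: real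
  assumes "a*r1^4+b*r1^3+c*r1^2+d*r1+e = 0" "a*r2^4+b*r2^3+c*r2^2+d*r2+e = 0"
    "a*r3^4+b*r3^3+c*r3^2+d*r3+e = 0" "a*r4^4+b*r4^3+c*r4^2+d*r4+e = 0"
    and "r1 \<noteq> r2" "r1 \<noteq> r3" "r1 \<noteq> r4" "r2 \<noteq> r3" "r2 \<noteq> r4" "r3 \<noteq> r4"
  shows "4*a*r1^3+3*b*r1^2+2*c*r1+d = a*(r1-r2)*(r1-r3)*(r1-r4)"
proof -
  define Q where "Q = (\<lambda>t. a*t^4+b*t^3+c*t^2+d*t+e)"
  have Qz: "Q r1 = 0" "Q r2 = 0" "Q r3 = 0" "Q r4 = 0" using assms(1-4) unfolding Q_def by auto
  define D where "D = (\<lambda>x y. a*(x^3+x^2*y+x*y^2+y^3) + b*(x^2+x*y+y^2)+c*(x+y)+d)"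
  have Dq: "(x - y) * D x y = Q x - Q y" for x y
    unfolding D_def Q_def by (simp add: algebra_simps power2_eq_square power3_eq_cube power4_eq_xxxx)
  have D12: "D r1 r2 = 0" using Dq[of r1 r2] Qz assms(5-) by simp
  have D13: "D r1 r3 = 0" using Dq[of r1 r3] Qz assms(5-) by simp
  have D14: "D r1 r4 = 0" using Dq[of r1 r4] Qz assms(5-) by simp
  define E where "E = (\<lambda>w. a*(r1^2+r2^2+w^2+r1*r2+r1*w+r2*w)+b*(r1+r2+w)+c)"
  have Eq: "(r2 - w) * E w = D r1 r2 - D r1 w" for w
    unfolding D_def E_def by (simp add: algebra_simps power2_eq_square power3_eq_cube)
  have E3: "E r3 = 0" using Eq[of r3] D12 D13 assms by simp
  have E4: "E r4 = 0" using Eq[of r4] D12 D14 assms by simp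
  have "(r3 - r4) * (a*(r1+r2+r3+r4)+b) = E r3 - E r4"
    unfolding E_def by (simp add: algebra_simps power2_eq_square)
  hence F: "a*(r1+r2+r3+r4)+b = 0" using E3 E4 assms by simp
  have "4*a*r1^3+3*b*r1^2+2*c*r1+d = D r1 r2 + (r1-r2)*E r3 + (r1-r2)*(r1-r3)*(a*(r1+r2+r3+r4)+b)
        + a*(r1-r2)*(r1-r3)*(r1-r4)"
    unfolding D_def E_def by (simp add: algebra_simps power2_eq_square power3_eq_cube)
  then show ?thesis using D12 E3 F by simp
qed

lemma four_sum:
  fixes a p q r1 r2 r3 r4 :: real
  assumes "a \<noteq> 0" "r1 \<noteq> r2" "r1 \<noteq> r3" "r1 \<noteq> r4" "r2 \<noteq> r3" "r2 \<noteq> r4" "r3 \<noteq> r4"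
  shows "(p*r1+q)/(a*(r1-r2)*(r1-r3)*(r1-r4)) + (p*r2+q)/(a*(r2-r1)*(r2-r3)*(r2-r4))
       + (p*r3+q)/(a*(r3-r1)*(r3-r2)*(r3-r4)) + (p*r4+q)/(a*(r4-r1)*(r4-r2)*(r4-r3)) = 0"
proof -
  define P where "P = a*(r1-r2)*(r1-r3)*(r1-r4)*(r2-r3)*(r2-r4)*(r3-r4)"
  have n: "r1-r2 \<noteq> 0" "r1-r3 \<noteq> 0" "r1-r4 \<noteq> 0" "r2-r3 \<noteq> 0" "r2-r4 \<noteq> 0" "r3-r4\<noteq>0"
    using assms by auto
  have P0: "P \<noteq> 0" unfolding P_def using n assms(1) by simp
  have t1: "(p*r1+q)/(a*(r1-r2)*(r1-r3)*(r1-r4)) = (p*r1+q)*((r2-r3)*(r2-r4)*(r3-r4))/P"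
    apply (subst frac_eq_eq) using n assms(1) apply simp using P0 apply simp
    by (simp add: P_def algebra_simps)
  have t2: "(p*r2+q)/(a*(r2-r1)*(r2-r3)*(r2-r4)) = -((p*r2+q)*((r1-r3)*(r1-r4)*(r3-r4)))/P"
    apply (subst frac_eq_eq) using n assms(1) apply simp using P0 apply simp
    by (simp add: P_def algebra_simps)
  have t3: "(p*r3+q)/(a*(r3-r1)*(r3-r2)*(r3-r4)) = ((p*r3+q)*((r1-r2)*(r1-r4)*(r2-r4)))/P"
    apply (subst frac_eq_eq) using n assms(1) apply simp using P0 apply simp
    by (simp add: P_def algebra_simps)
  have t4: "(p*r4+q)/(a*(r4-r1)*(r4-r2)*(r4-r3)) = -((p*r4+q)*((r1-r2)*(r1-r3)*(r2-r3)))/P"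
    apply (subst frac_eq_eq) using n assms(1) apply simp using P0 apply simp
    by (simp add: P_def algebra_simps)
  have "(p*r1+q)*((r2-r3)*(r2-r4)*(r3-r4)) - ((p*r2+q)*((r1-r3)*(r1-r4)*(r3-r4)))
     + ((p*r3+q)*((r1-r2)*(r1-r4)*(r2-r4))) - ((p*r4+q)*((r1-r2)*(r1-r3)*(r2-r3))) = 0"
    by (simp add: algebra_simps)
  then show ?thesis unfolding t1 t2 t3 t4 by (simp add: add_divide_distrib[symmetric] diff_divide_distrib[symmetric])
qed

lemma card4_obtain:
  assumes "card R = 4"
  obtains r1 r2 r3 r4 where "R = {r1,r2,r3,r4}" "r1 \<noteq> r2" "r1 \<noteq> r3" "r1 \<noteq> r4"
    "r2 \<noteq> r3" "r2 \<noteq> r4" "r3 \<noteq> r4"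
  using assms by (auto simp: card_Suc_eq numeral_eq_Suc)

lemma quartic_sum:
  fixes a b c d e p q :: real and R :: "real set"
  assumes "card R = 4" "a \<noteq> 0" "\<forall>r\<in>R. a*r^4+b*r^3+c*r^2+d*r+e = 0"
  shows "(\<Sum>r\<in>R. (p*r+q)/(4*a*r^3+3*b*r^2+2*c*r+d)) = 0"
proof -
  obtain r1 r2 r3 r4 where R: "R = {r1,r2,r3,r4}" and ne: "r1 \<noteq> r2" "r1 \<noteq> r3" "r1 \<noteq> r4"
    "r2 \<noteq> r3" "r2 \<noteq> r4" "r3 \<noteq> r4" using card4_obtain[OF assms(1)] by blast
  have z: "a*r1^4+b*r1^3+c*r1^2+d*r1+e = 0" "a*r2^4+b*r2^3+c*r2^2+d*r2+e = 0"
     "a*r3^4+b*r3^3+c*r3^2+d*r3+e = 0" "a*r4^4+b*r4^3+c*r4^2+d*r4+e = 0"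
    using assms(3) R by auto
  have d1: "4*a*r1^3+3*b*r1^2+2*c*r1+d = a*(r1-r2)*(r1-r3)*(r1-r4)"
    using quartic_deriv[where a=a and b=b and c=c and d=d and e=e, of r1 r2 r3 r4] z ne by auto
  have d2: "4*a*r2^3+3*b*r2^2+2*c*r2+d = a*(r2-r1)*(r2-r3)*(r2-r4)"
    using quartic_deriv[where a=a and b=b and c=c and d=d and e=e, of r2 r1 r3 r4] z ne by auto
  have d3: "4*a*r3^3+3*b*r3^2+2*c*r3+d = a*(r3-r1)*(r3-r2)*(r3-r4)"
    using quartic_deriv[where a=a and b=b and c=c and d=d and e=e, of r3 r1 r2 r4] z ne by auto
  have d4: "4*a*r4^3+3*b*r4^2+2*c*r4+d = a*(r4-r1)*(r4-r2)*(r4-r3)"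
    using quartic_deriv[where a=a and b=b and c=c and d=d and e=e, of r4 r1 r2 r3] z ne by auto
  show ?thesis unfolding R using ne d1 d2 d3 d4 four_sum[OF assms(2) ne, of p q]
    by (simp add: add.assoc)
qed

lemma cubic_sum:
  fixes c d :: real and R :: "real set"
  assumes "card R = 3" "\<forall>r\<in>R. r^3+c*r+d = 0"
  shows "(\<Sum>r\<in>R. 1/(3*r^2+c)) = 0"
proof -
  obtain r1 r2 r3 where R: "R = {r1,r2,r3}" and ne: "r1 \<noteq> r2" "r1 \<noteq> r3" "r2 \<noteq> r3"
    using assms(1) by (auto simp: card_Suc_eq numeral_eq_Suc)
  define D where "D = (\<lambda>x y. x^2+x*y+y^2+c)"
  have Dq: "(x - y) * D x y = (x^3+c*x+d) - (y^3+c*y+d)" for x y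
    unfolding D_def by (simp add: algebra_simps power2_eq_square power3_eq_cube)
  have z: "r1^3+c*r1+d = 0" "r2^3+c*r2+d = 0" "r3^3+c*r3+d = 0" using assms R by auto
  have D: "D r1 r2 = 0" "D r1 r3 = 0" "D r2 r3 = 0" using Dq[of r1 r2] Dq[of r1 r3] Dq[of r2 r3] z ne by auto
  have "(r2 - r3) * (r1+r2+r3) = D r1 r2 - D r1 r3" unfolding D_def by (simp add: algebra_simps power2_eq_square)
  hence S: "r1+r2+r3 = 0" using D ne by simp
  have e1: "3*r1^2+c = (r1-r2)*(r1-r3)" "3*r2^2+c = (r2-r1)*(r2-r3)" "3*r3^2+c = (r3-r1)*(r3-r2)"
    using D S unfolding D_def by (simp_all add: algebra_simps power2_eq_square) 
  have n: "r1-r2 \<noteq> 0" "r1-r3 \<noteq> 0" "r2-r3 \<noteq> 0" "r2-r1 \<noteq> 0" "r3-r1 \<noteq> 0" "r3-r2 \<noteq> 0"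
    using ne by auto
  define P where "P = (r1-r2)*(r1-r3)*(r2-r3)"
  have P0: "P \<noteq> 0" unfolding P_def using n by simp
  have t1: "1/((r1-r2)*(r1-r3)) = (r2-r3)/P"
    apply (subst frac_eq_eq)
    using n P0 apply simp
    using n P0 apply simp
    by (simp add: P_def algebra_simps)
  have t2: "1/((r2-r1)*(r2-r3)) = -(r1-r3)/P"
    apply (subst frac_eq_eq)
    using n P0 apply simp
    using n P0 apply simp
    by (simp add: P_def algebra_simps)
  have t3: "1/((r3-r1)*(r3-r2)) = (r1-r2)/P"
    apply (subst frac_eq_eq)
    using n P0 apply simp
    using n P0 apply simp
    by (simp add: P_def algebra_simps)
  have "1/((r1-r2)*(r1-r3)) + 1/((r2-r1)*(r2-r3)) + 1/((r3-r1)*(r3-r2)) = 0"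
    unfolding t1 t2 t3 by (simp add: add_divide_distrib[symmetric])
  then show ?thesis unfolding R using ne e1 by (simp add: add.assoc)
qed


lemma jac_from_deriv:
  assumes "(f has_derivative D) (at x)"
  shows "jac_det f x = fst (D (1,0)) * snd (D (0,1)) - fst (D (0,1)) * snd (D (1,0))"
  unfolding jac_det_def using frechet_derivative_at[OF assms] by (simp add: Let_def)

lemma jac_fold: "jac_det (lens_map Fold c) (x1,x2) = 2*x2"
proof -
  have e: "lens_map Fold c = (\<lambda>x::real*real. (fst x, (snd x)^2))"
    by (rule ext) (auto split: prod.splits)
  have "((\<lambda>x::real*real. (fst x, (snd x)^2)) has_derivative
     (\<lambda>h. (fst h, 2 * x2 * snd h))) (at (x1,x2))"
    by (auto intro!: derivative_eq_intros simp: algebra_simps)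
  from jac_from_deriv[OF this] show ?thesis unfolding e by simp
qed

lemma jac_cusp: "jac_det (lens_map Cusp c) (x1,x2) = x1 + 3*x2^2"
proof -
  have e: "lens_map Cusp c = (\<lambda>x::real*real. (fst x, fst x * snd x + (snd x)^3))"
    by (rule ext) (auto split: prod.splits)
  have "((\<lambda>x::real*real. (fst x, fst x * snd x + (snd x)^3)) has_derivative
     (\<lambda>h. (fst h, x2 * fst h + x1 * snd h + 3 * x2^2 * snd h))) (at (x1,x2))"
    by (auto intro!: derivative_eq_intros simp: algebra_simps)
  from jac_from_deriv[OF this] show ?thesis unfolding e by simp
qed

lemma jac_swallow: "jac_det (lens_map Swallowtail c) (x1,x2) = x2 + 2*c*x1 + 4*x1^3"
proof -
  have e: "lens_map Swallowtail c = (\<lambda>x::real*real. (fst x * snd x + c * (fst x)^2 + (fst x)^4, snd x))"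
    by (rule ext) (auto split: prod.splits)
  have "((\<lambda>x::real*real. (fst x * snd x + c * (fst x)^2 + (fst x)^4, snd x)) has_derivative
     (\<lambda>h. ((x2 + 2*c*x1 + 4*x1^3) * fst h + x1 * snd h, snd h))) (at (x1,x2))"
    by (auto intro!: derivative_eq_intros simp: algebra_simps power3_eq_cube)
  from jac_from_deriv[OF this] show ?thesis unfolding e by simp
qed

lemma jac_ell: "jac_det (lens_map EllipticUmbilic c) (x1,x2) = 4*c^2 - 36*x1^2 - 36*x2^2"
proof -
  have e: "lens_map EllipticUmbilic c = (\<lambda>x::real*real. (3*(snd x)^2 - 3*(fst x)^2 - 2*c* fst x,
      6* fst x * snd x - 2*c* snd x))"
    by (rule ext) (auto split: prod.splits)
  have "((\<lambda>x::real*real. (3*(snd x)^2 - 3*(fst x)^2 - 2*c* fst x,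
      6* fst x * snd x - 2*c* snd x)) has_derivative
     (\<lambda>h. ((-6*x1-2*c) * fst h + 6*x2 * snd h, 6*x2 * fst h + (6*x1 - 2*c) * snd h))) (at (x1,x2))"
    by (auto intro!: derivative_eq_intros simp: algebra_simps)
  from jac_from_deriv[OF this] show ?thesis unfolding e by (simp add: algebra_simps power2_eq_square)
qed

lemma jac_hyp: "jac_det (lens_map HyperbolicUmbilic c) (x1,x2) = 36*x1*x2 - c^2"
proof -
  have e: "lens_map HyperbolicUmbilic c = (\<lambda>x::real*real. (-3*(fst x)^2 - c * snd x, -3*(snd x)^2 - c * fst x))"
    by (rule ext) (auto split: prod.splits)
  have "((\<lambda>x::real*real. (-3*(fst x)^2 - c * snd x, -3*(snd x)^2 - c * fst x)) has_derivative
     (\<lambda>h. (-6*x1* fst h - c * snd h, -6*x2* snd h - c * fst h))) (at (x1,x2))"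
    by (auto intro!: derivative_eq_intros simp: algebra_simps)
  from jac_from_deriv[OF this] show ?thesis unfolding e by (simp add: algebra_simps power2_eq_square)
qed
lemma jac_fold': "jac_det (lens_map Fold c) x = 2 * snd x" by (cases x) (simp add: jac_fold)
lemma jac_cusp': "jac_det (lens_map Cusp c) x = fst x + 3 * (snd x)^2" by (cases x) (simp add: jac_cusp)
lemma jac_swallow': "jac_det (lens_map Swallowtail c) x = snd x + 2*c * fst x + 4 * (fst x)^3"
  by (cases x) (simp add: jac_swallow)
lemma jac_ell': "jac_det (lens_map EllipticUmbilic c) x = 4*c^2 - 36 * (fst x)^2 - 36 * (snd x)^2"
  by (cases x) (simp add: jac_ell)
lemma jac_hyp': "jac_det (lens_map HyperbolicUmbilic c) x = 36 * fst x * snd x - c^2"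
  by (cases x) (simp add: jac_hyp)


lemma case_fold:
  assumes "card (lens_map Fold c -` {s}) = 2"
    and "\<forall>x \<in> lens_map Fold c -` {s}. jac_det (lens_map Fold c) x \<noteq> 0"
  shows "(\<Sum>x \<in> lens_map Fold c -` {s}. 1 / jac_det (lens_map Fold c) x) = 0"
proof -
  obtain u v where P: "lens_map Fold c -` {s} = {u,v}" and uv: "u \<noteq> v"
    using assms(1) by (auto simp: card_2_iff)
  obtain u1 u2 v1 v2 where u: "u = (u1,u2)" and v: "v = (v1,v2)" by fastforce
  have fu: "lens_map Fold c u = s" and fv: "lens_map Fold c v = s" using P by auto
  hence "u1 = v1" "u2^2 = v2^2" using u v by auto
  hence "v2 = -u2" using uv u v by (auto simp: power2_eq_iff)
  then show ?thesis unfolding P using uv u v by (simp add: jac_fold)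
qed

lemma case_cusp:
  assumes "card (lens_map Cusp c -` {s}) = 3"
  shows "(\<Sum>x \<in> lens_map Cusp c -` {s}. 1 / jac_det (lens_map Cusp c) x) = 0"
proof -
  obtain s1 s2 where s: "s = (s1,s2)" by fastforce
  let ?P = "lens_map Cusp c -` {s}"
  have mem: "fst x = s1 \<and> (snd x)^3 + s1* snd x + (-s2) = 0" if "x \<in> ?P" for x
    using that by (cases x) (auto simp: s algebra_simps)
  have inj: "inj_on snd ?P"
    by (rule inj_onI) (metis mem prod.expand)
  have "(\<Sum>x \<in> ?P. 1 / jac_det (lens_map Cusp c) x) = (\<Sum>x \<in> ?P. 1/(3*(snd x)^2 + s1))"
    apply (rule sum.cong, simp)
    subgoal for x using mem[of x] jac_cusp'[of c x] by simp
    done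
  also have "\<dots> = (\<Sum>t \<in> snd ` ?P. 1/(3*t^2 + s1))" by (simp add: sum.reindex[OF inj])
  also have "\<dots> = 0"
    by (rule cubic_sum[where d="-s2"]) (use assms card_image[OF inj] in \<open>auto dest!: mem\<close>)
  finally show ?thesis .
qed

lemma case_swallow:
  assumes "card (lens_map Swallowtail c -` {s}) = 4"
  shows "(\<Sum>x \<in> lens_map Swallowtail c -` {s}. 1 / jac_det (lens_map Swallowtail c) x) = 0"
proof -
  obtain s1 s2 where s: "s = (s1,s2)" by fastforce
  let ?P = "lens_map Swallowtail c -` {s}"
  have mem: "snd x = s2 \<and> 1*(fst x)^4 + 0*(fst x)^3 + c*(fst x)^2 + s2* fst x + (-s1) = 0" if "x \<in> ?P" for x
    using that by (cases x) (auto simp: s algebra_simps)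
  have inj: "inj_on fst ?P"
    by (rule inj_onI) (metis mem prod.expand)
  have "(\<Sum>x \<in> ?P. 1 / jac_det (lens_map Swallowtail c) x)
     = (\<Sum>x \<in> ?P. (0* fst x+1)/(4*1*(fst x)^3 + 3*0*(fst x)^2 + 2*c*(fst x) + s2))"
    apply (rule sum.cong, simp)
    subgoal for x using mem[of x] jac_swallow'[of c x] by (simp add: algebra_simps)
    done
  also have "\<dots> = (\<Sum>t \<in> fst ` ?P. (0*t+1)/(4*1*t^3 + 3*0*t^2 + 2*c*t + s2))"
    by (simp add: sum.reindex[OF inj])
  also have "\<dots> = 0"
    by (rule quartic_sum[where e="-s1"]) (use assms card_image[OF inj] in \<open>auto dest!: mem\<close>)
  finally show ?thesis .
qed

lemma case_hyp:
  assumes "card (lens_map HyperbolicUmbilic c -` {s}) = 4"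
    and "\<forall>x \<in> lens_map HyperbolicUmbilic c -` {s}. jac_det (lens_map HyperbolicUmbilic c) x \<noteq> 0"
  shows "(\<Sum>x \<in> lens_map HyperbolicUmbilic c -` {s}. 1 / jac_det (lens_map HyperbolicUmbilic c) x) = 0"
proof -
  obtain s1 s2 where s: "s = (s1,s2)" by fastforce
  let ?P = "lens_map HyperbolicUmbilic c -` {s}"
  let ?J = "jac_det (lens_map HyperbolicUmbilic c)"
  have mem: "s1 = -3*(fst x)^2 - c * snd x \<and> s2 = -3*(snd x)^2 - c * fst x" if "x \<in> ?P" for x
    using that by (cases x) (auto simp: s)
  show ?thesis
  proof (cases "c = 0")
    case True
    define \<sigma> where "\<sigma> = (\<lambda>x::real*real. (- fst x, snd x))"
    have sP: "(- fst x, snd x) \<in> ?P" if "x \<in> ?P" for x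
      using that by (cases x) (auto simp: \<sigma>_def s True)
    have "(\<Sum>x \<in> ?P. 1 / ?J x) = (\<Sum>x \<in> ?P. 1 / ?J (\<sigma> x))"
      apply (rule sum.reindex_bij_witness[of _ \<sigma> \<sigma>])
      using sP by (auto simp: \<sigma>_def)
    also have "\<dots> = - (\<Sum>x \<in> ?P. 1 / ?J x)"
      by (simp add: sum_negf[symmetric] \<sigma>_def True jac_hyp')
    finally show ?thesis by simp
  next
    case False
    have inj: "inj_on fst ?P"
    proof (rule inj_onI)
      fix u v assume "u \<in> ?P" "v \<in> ?P" "fst u = fst v"
      then have e1: "s1 = -3*(fst u)^2 - c * snd u" "s1 = -3*(fst u)^2 - c * snd v"
        using mem[of u] mem[of v] by auto
      then have "c * snd u = c * snd v" by linarith
      then show "u = v" using \<open>fst u = fst v\<close> False by (simp add: prod_eq_iff)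
    qed
    have "(\<Sum>x \<in> ?P. 1 / ?J x)
       = (\<Sum>x \<in> ?P. (0* fst x+(-c))/(4*27*(fst x)^3 + 3*0*(fst x)^2 + 2*(18* s1)*(fst x) + c^3))"
    proof (rule sum.cong)
      fix x assume "x \<in> ?P"
      obtain x1 x2 where x: "x = (x1,x2)" by fastforce
      have m: "s1 = -3*x1^2 - c*x2" "s2 = -3*x2^2 - c*x1"
        using mem[OF \<open>x \<in> ?P\<close>] x by auto
      have J0: "36*x1*x2 - c^2 \<noteq> 0" using assms(2)[rule_format, OF \<open>x \<in> ?P\<close>] unfolding x jac_hyp .
      have "4*27*x1^3 + 3*0*x1^2 + 2*(18* s1)*x1 + c^3 = -c*(36*x1*x2 - c^2)"
        unfolding m by (simp add: algebra_simps power2_eq_square power3_eq_cube)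
      then show "1 / ?J x = (0* fst x+(-c))/(4*27*(fst x)^3 + 3*0*(fst x)^2 + 2*(18* s1)*(fst x) + c^3)"
        using x J0 False by (simp add: jac_hyp)
    qed simp
    also have "\<dots> = (\<Sum>t \<in> fst ` ?P. (0*t+(-c))/(4*27*t^3 + 3*0*t^2 + 2*(18* s1)*t + c^3))"
      by (simp add: sum.reindex[OF inj])
    also have "\<dots> = 0"
    proof (rule quartic_sum[where e="3* s1^2+c^2* s2"])
      show "card (fst ` ?P) = 4" using assms card_image[OF inj] by simp
      show "\<forall>r\<in>fst ` ?P. 27 * r ^ 4 + 0 * r ^ 3 + (18* s1) * r\<^sup>2 + c^3 * r + (3* s1^2+c^2* s2) = 0"
      proof
        fix r assume "r \<in> fst ` ?P"
        then obtain x2 where "(r,x2) \<in> ?P" by force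
        from mem[OF this] have m: "s1 = -3*r^2 - c*x2" "s2 = -3*x2^2 - c*r" by auto
        show "27 * r ^ 4 + 0 * r ^ 3 + (18* s1) * r\<^sup>2 + c^3 * r + (3* s1^2+c^2* s2) = 0"
          unfolding m by (simp add: algebra_simps power2_eq_square power3_eq_cube power4_eq_xxxx)
      qed
    qed simp
    finally show ?thesis .
  qed
qed


lemma ell_s2_nz:
  fixes s1 s2 c :: real
  assumes "card (lens_map EllipticUmbilic c -` {(s1,s2)}) = 4"
    and "\<forall>x \<in> lens_map EllipticUmbilic c -` {(s1,s2)}. jac_det (lens_map EllipticUmbilic c) x \<noteq> 0"
    and s2: "s2 \<noteq> 0"
  shows "(\<Sum>x \<in> lens_map EllipticUmbilic c -` {(s1,s2)}. 1 / jac_det (lens_map EllipticUmbilic c) x) = 0"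
proof -
  let ?P = "lens_map EllipticUmbilic c -` {(s1,s2)}"
  let ?J = "jac_det (lens_map EllipticUmbilic c)"
  let ?R' = "\<lambda>t. 4*(-108)*t^3 + 3*0*t^2 + 2*(-36*(s1-c^2))*t + (-8*c^3+24*c* s1)"
  have mem: "s1 = 3*(snd x)^2 - 3*(fst x)^2 - 2*c * fst x \<and> s2 = 6 * fst x * snd x - 2*c * snd x"
    if "x \<in> ?P" for x
    using that by (cases x) auto
  have inj: "inj_on fst ?P"
  proof (rule inj_onI)
    fix u v assume uv: "u \<in> ?P" "v \<in> ?P" "fst u = fst v"
    have "s2 = (6 * fst u - 2*c) * snd u" "s2 = (6 * fst u - 2*c) * snd v"
      using mem[OF uv(1)] mem[OF uv(2)] uv(3) by (auto simp: algebra_simps)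
    then have "snd u = snd v" using s2 by (metis mult_cancel_left mult_eq_0_iff)
    then show "u = v" using uv(3) by (simp add: prod_eq_iff)
  qed
  have "(\<Sum>x \<in> ?P. 1 / ?J x) = (\<Sum>x \<in> ?P. (6 * fst x + (-2*c)) / ?R' (fst x))"
  proof (rule sum.cong)
    fix x assume xP: "x \<in> ?P"
    obtain x1 x2 where x: "x = (x1,x2)" by fastforce
    have m: "s1 = 3*x2^2 - 3*x1^2 - 2*c*x1" "s2 = 6*x1*x2 - 2*c*x2"
      using mem[OF xP] x by auto
    have J0: "4*c^2 - 36*x1^2 - 36*x2^2 \<noteq> 0" using assms(2)[rule_format, OF xP] unfolding x jac_ell .
    have u0: "6*x1 + (-2*c) \<noteq> 0"
    proof
      assume "6*x1 + (-2*c) = 0"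
      then have "s2 = (6*x1 - 2*c) * x2" using m by (simp add: algebra_simps)
      with \<open>6*x1 + (-2*c) = 0\<close> s2 show False by simp
    qed
    have "?R' x1 = (6*x1 + (-2*c)) * (4*c^2 - 36*x1^2 - 36*x2^2)"
      unfolding m by (simp add: algebra_simps power2_eq_square power3_eq_cube)
    then show "1 / ?J x = (6 * fst x + (-2*c)) / ?R' (fst x)"
      using x J0 u0 by (simp add: jac_ell)
  qed simp
  also have "\<dots> = (\<Sum>t \<in> fst ` ?P. (6 * t + (-2*c)) / ?R' t)"
    by (simp add: sum.reindex[OF inj])
  also have "\<dots> = 0"
  proof (rule quartic_sum[where e="3* s2^2-4*c^2* s1"])
    show "card (fst ` ?P) = 4" using assms card_image[OF inj] by simp
    show "\<forall>r\<in>fst ` ?P. (-108) * r ^ 4 + 0 * r ^ 3 + (-36*(s1-c^2)) * r\<^sup>2 + (-8*c^3+24*c* s1) * r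
        + (3* s2^2-4*c^2* s1) = 0"
    proof
      fix r assume "r \<in> fst ` ?P"
      then obtain x2 where "(r,x2) \<in> ?P" by force
      from mem[OF this] have m: "s1 = 3*x2^2 - 3*r^2 - 2*c*r" "s2 = 6*r*x2 - 2*c*x2" by auto
      show "(-108) * r ^ 4 + 0 * r ^ 3 + (-36*(s1-c^2)) * r\<^sup>2 + (-8*c^3+24*c* s1) * r
        + (3* s2^2-4*c^2* s1) = 0"
        unfolding m by (simp add: algebra_simps power2_eq_square power3_eq_cube power4_eq_xxxx)
    qed
  qed simp
  finally show ?thesis .
qed


lemma card_two_le: "card {a, b} \<le> 2"
  by (simp add: card_insert_if)

lemma ell_s2_z:
  fixes s1 c :: real
  assumes card: "card (lens_map EllipticUmbilic c -` {(s1,0)}) = 4"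
    and J: "\<forall>x \<in> lens_map EllipticUmbilic c -` {(s1,0)}. jac_det (lens_map EllipticUmbilic c) x \<noteq> 0"
  shows "(\<Sum>x \<in> lens_map EllipticUmbilic c -` {(s1,0)}. 1 / jac_det (lens_map EllipticUmbilic c) x) = 0"
proof -
  let ?P = "lens_map EllipticUmbilic c -` {(s1,0)}"
  let ?J = "jac_det (lens_map EllipticUmbilic c)"
  have fin: "finite ?P" using card by (metis card.infinite zero_neq_numeral)
  have mem: "s1 = 3*(snd x)^2 - 3*(fst x)^2 - 2*c * fst x \<and> 0 = 6 * fst x * snd x - 2*c * snd x"
    if "x \<in> ?P" for x
    using that by (cases x) auto
  define A where "A = {x\<in>?P. snd x = 0}"
  define B where "B = {x\<in>?P. snd x \<noteq> 0}"
  define q where "q = sqrt (c^2 - 3 * s1)"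
  define y where "y = sqrt ((s1 + c^2)/3)"
  define p1 where "p1 = ((-c+q)/3, 0::real)"
  define p2 where "p2 = ((-c-q)/3, 0::real)"
  define p3 where "p3 = (c/3, y)"
  define p4 where "p4 = (c/3, -y)"
  have AB: "?P = A \<union> B" "A \<inter> B = {}" unfolding A_def B_def by auto
  have finA: "finite A" "finite B" unfolding A_def B_def by (rule finite_subset[OF _ fin], blast)+
  have Asub: "A \<subseteq> {p1, p2}"
  proof
    fix x assume "x \<in> A"
    then have xP: "x \<in> ?P" and x2: "snd x = 0" unfolding A_def by auto
    have "(3 * fst x + c)^2 = c^2 - 3 * s1" using mem[OF xP] x2
      by (simp add: algebra_simps power2_eq_square)
    then have "\<bar>3 * fst x + c\<bar> = q" unfolding q_def by (metis real_sqrt_abs)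
    then have "fst x = (-c+q)/3 \<or> fst x = (-c-q)/3" by (auto simp: abs_if field_simps)
    then show "x \<in> {p1,p2}" using x2 unfolding p1_def p2_def by (auto simp: prod_eq_iff)
  qed
  have Bsub: "B \<subseteq> {p3, p4}"
  proof
    fix x assume "x \<in> B"
    then have xP: "x \<in> ?P" and x2: "snd x \<noteq> 0" unfolding B_def by auto
    have "0 = (6 * fst x - 2*c) * snd x" using mem[OF xP] by (simp add: algebra_simps)
    then have x1: "fst x = c/3" using x2 by simp
    have "(snd x)^2 = (s1 + c^2)/3" using mem[OF xP] x1
      by (simp add: algebra_simps power2_eq_square)
    then have "\<bar>snd x\<bar> = y" unfolding y_def by (metis real_sqrt_abs)
    then have "snd x = y \<or> snd x = -y" by (auto simp: abs_if)
    then show "x \<in> {p3,p4}" using x1 unfolding p3_def p4_def by (auto simp: prod_eq_iff)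
  qed
  have cA: "card A \<le> 2" using card_mono[OF _ Asub] card_two_le[of p1 p2] by simp
  have cB: "card B \<le> 2" using card_mono[OF _ Bsub] card_two_le[of p3 p4] by simp
  have "card A + card B = 4" using card_Un_disjoint[OF finA AB(2)] AB(1) card by simp
  then have cA2: "card A = 2" and cB2: "card B = 2" using cA cB by auto
  have A: "A = {p1,p2}" by (rule card_subset_eq) (use Asub cA2 card_two_le[of p1 p2] card_mono[OF _ Asub] in auto)
  have B: "B = {p3,p4}" by (rule card_subset_eq) (use Bsub cB2 card_two_le[of p3 p4] card_mono[OF _ Bsub] in auto)
  have p12: "p1 \<noteq> p2" using cA2 A by auto
  have p34: "p3 \<noteq> p4" using cB2 B by auto
  have q0: "q \<noteq> 0" using p12 unfolding p1_def p2_def by auto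
  have y0: "y \<noteq> 0" using p34 unfolding p3_def p4_def by auto
  have qq: "q^2 = c^2 - 3 * s1"
  proof -
    obtain x where "x \<in> A" using A by blast
    then have xP: "x \<in> ?P" and x2: "snd x = 0" unfolding A_def by auto
    have "(3 * fst x + c)^2 = c^2 - 3 * s1" using mem[OF xP] x2
      by (simp add: algebra_simps power2_eq_square)
    then have "c^2 - 3 * s1 \<ge> 0" by (metis zero_le_power2)
    then show ?thesis unfolding q_def by simp
  qed
  have yy: "y^2 = (s1+c^2)/3"
  proof -
    obtain x where "x \<in> B" using B by blast
    then have xP: "x \<in> ?P" and x2: "snd x \<noteq> 0" unfolding B_def by auto
    have "0 = (6 * fst x - 2*c) * snd x" using mem[OF xP] by (simp add: algebra_simps)
    then have x1: "fst x = c/3" using x2 by simp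
    have "(snd x)^2 = (s1 + c^2)/3" using mem[OF xP] x1
      by (simp add: algebra_simps power2_eq_square)
    then have "(s1+c^2)/3 \<ge> 0" by (metis zero_le_power2)
    then show ?thesis unfolding y_def by simp
  qed
  have s1: "s1 = (c^2 - q^2)/3" using qq by simp
  have j1: "?J p1 = 4*q*(2*c-q)" unfolding p1_def jac_ell
    by (simp add: field_simps power2_eq_square)
  have j2: "?J p2 = -4*q*(2*c+q)" unfolding p2_def jac_ell
    by (simp add: field_simps power2_eq_square)
  have j3: "?J p3 = -4*(2*c-q)*(2*c+q)" unfolding p3_def jac_ell yy s1
    by (simp add: field_simps power2_eq_square)
  have j4: "?J p4 = -4*(2*c-q)*(2*c+q)" unfolding p4_def jac_ell
    using yy s1 by (simp add: field_simps power2_eq_square)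
  have Jn: "?J p1 \<noteq> 0" "?J p2 \<noteq> 0" "?J p3 \<noteq> 0" using J A B AB by auto
  have n1: "2*c - q \<noteq> 0" using Jn(1) j1 by auto
  have n2: "2*c + q \<noteq> 0" using Jn(2) j2 by auto
  define M where "M = 4*q*(2*c-q)*(2*c+q)"
  have M0: "M \<noteq> 0" unfolding M_def using q0 n1 n2 by simp
  have t1: "1/(4*q*(2*c-q)) = (2*c+q)/M"
    apply (subst frac_eq_eq) using q0 n1 n2 M0 apply simp using M0 apply simp
    by (simp add: M_def algebra_simps)
  have t2: "1/(-4*q*(2*c+q)) = -(2*c-q)/M"
    apply (subst frac_eq_eq) using q0 n1 n2 M0 apply simp using M0 apply simp
    by (simp add: M_def algebra_simps)
  have t3: "1/(-4*(2*c-q)*(2*c+q)) = -q/M"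
    apply (subst frac_eq_eq) using q0 n1 n2 M0 apply simp using M0 apply simp
    by (simp add: M_def algebra_simps)
  have "(\<Sum>x \<in> ?P. 1 / ?J x) = (\<Sum>x \<in> A. 1 / ?J x) + (\<Sum>x \<in> B. 1 / ?J x)"
    using AB finA by (simp add: sum.union_disjoint)
  also have "\<dots> = (1/?J p1 + 1/?J p2) + (1/?J p3 + 1/?J p4)"
    unfolding A B using p12 p34 by simp
  also have "\<dots> = (2*c+q)/M + -(2*c-q)/M + (-q/M + -q/M)"
    unfolding j1 j2 j3 j4 t1 t2 t3 by simp
  also have "\<dots> = 0" by (simp add: add_divide_distrib[symmetric])
  finally show ?thesis .
qed

theorem theorem8p2:
  fixes k :: caustic and c :: real and s :: "real \<times> real"
  assumes "finite (lens_map k c -` {s})"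
    and "card (lens_map k c -` {s}) = image_count k"
    and "\<forall>x \<in> lens_map k c -` {s}. jac_det (lens_map k c) x \<noteq> 0"
  shows "(\<Sum>x \<in> lens_map k c -` {s}. 1 / jac_det (lens_map k c) x) = 0"
proof (cases k)
  case Fold
  then show ?thesis using case_fold assms(2,3) by simp
next
  case Cusp
  then show ?thesis using case_cusp assms(2) by simp
next
  case Swallowtail
  then show ?thesis using case_swallow assms(2) by simp
next
  case EllipticUmbilic
  obtain s1 s2 where s: "s = (s1,s2)" by fastforce
  show ?thesis
  proof (cases "s2 = 0")
    case True
    then show ?thesis using ell_s2_z[of c s1] assms(2,3) EllipticUmbilic s by simp
  next
    case False
    then show ?thesis using ell_s2_nz[of c s1 s2] assms(2,3) EllipticUmbilic s by simp
  qed
next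
  case HyperbolicUmbilic
  then show ?thesis using case_hyp assms(2,3) by simp
qed

end
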